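(* Let $(S,\mathcal C)$ be a connectoid. For every end $\omega$ of $(S,\mathcal C)$ there is a unique direction $d_\omega$ of $(S,\mathcal C)$ such that $d_\omega(A)=K(A,\omega)$ for every finite set $A\subseteq S$. The map $\omega\mapsto d_\omega$ is a bijection between $\Omega(S,\mathcal C)$ and the set of directions of $(S,\mathcal C)$.
   Context: A connectoid is given by a set $S$ and a set $\mathcal F$ of finite subsets of $S$ such that (i) $F\cup F'\in\mathcal F$ whenever $F,F'\in\mathcal F$ and $F\cap F'\neq\emptyset$, and (ii) $\emptyset\in\mathcal F$ and $\{s\}\in\mathcal F$ for every $s\in S$. A set $C\subseteq S$ is connected if for all $x,y\in C$ there is $F\in\mathcal F$ with $F\subseteq C$ and $x,y\in F$; $\mathcal C$ is the set of connected sets and $(S,\mathcal C)$ is the connectoid (the finite connected sets are exactly the elements of $\mathcal F$). For $S'\subseteq S$, a component of $S'$ is a maximal connected subset of $S'$, and $\mathcal K(S')$ is the set of components of $S'$ (it partitions $S'$). "Almost all" means all but finitely many. A necklace is a connected set $N$ for which there is a family $(H_n)_{n\in\mathbb N}$ of finite connected sets with $N=\bigcup_n H_n$ and $H_i\cap H_j\neq\emptyset$ iff $|i-j|\le 1$. For a necklace $N$ and finite $X\subseteq S$, exactly one element of $\mathcal K(N\setminus X)$ contains almost all elements of $N$; it is called the $X$-tail of $N$. Two necklaces are equivalent if for every finite $X\subseteq S$ their $X$-tails are contained in the same element of $\mathcal K(S\setminus X)$. An end is an equivalence class of necklaces; $\Omega(S,\mathcal C)$ is the set of ends. For an end $\omega$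 and finite $X\subseteq S$, $K(X,\omega)$ denotes the element of $\mathcal K(S\setminus X)$ containing the $X$-tails of all necklaces in $\omega$. A direction of $(S,\mathcal C)$ is a map $d$ assigning to every finite $A\subseteq S$ an element $d(A)\in\mathcal K(S\setminus A)$ such that $d(B)\subseteq d(A)$ whenever $A\subseteq B$ are finite subsets of $S$. *)

theory Defs
  imports Main
begin

definition connectoid :: "'a set \<Rightarrow> 'a set set \<Rightarrow> bool" where
  "connectoid S F \<longleftrightarrow>
     (\<forall>H\<in>F. finite H \<and> H \<subseteq> S) \<and>
     (\<forall>H\<in>F. \<forall>H'\<in>F. H \<inter> H' \<noteq> {} \<longrightarrow> H \<union> H' \<in> F) \<and>
     {} \<in> F \<and> (\<forall>s\<in>S. {s} \<in> F)"

definition connected_set :: "'a set \<Rightarrow> 'a set set \<Rightarrow> 'a set \<Rightarrow> bool" where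
  "connected_set S F C \<longleftrightarrow> C \<subseteq> S \<and>
     (\<forall>x\<in>C. \<forall>y\<in>C. \<exists>H\<in>F. H \<subseteq> C \<and> x \<in> H \<and> y \<in> H)"

text \<open>Components: nonempty maximal connected subsets (so that they partition the set).\<close>
definition components :: "'a set \<Rightarrow> 'a set set \<Rightarrow> 'a set \<Rightarrow> 'a set set" where
  "components S F X = {C. C \<noteq> {} \<and> C \<subseteq> X \<and> connected_set S F C \<and>
     (\<forall>D. C \<subseteq> D \<and> D \<subseteq> X \<and> connected_set S F D \<longrightarrow> D = C)}"

definition necklace :: "'a set \<Rightarrow> 'a set set \<Rightarrow> 'a set \<Rightarrow> bool" where
  "necklace S F N \<longleftrightarrow> connected_set S F N \<and>
     (\<exists>H :: nat \<Rightarrow> 'a set. (\<forall>n. H n \<in> F) \<and> N = (\<Union>n. H n) \<and>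
        (\<forall>i j. H i \<inter> H j \<noteq> {} \<longleftrightarrow> i \<le> j + 1 \<and> j \<le> i + 1))"

definition tail :: "'a set \<Rightarrow> 'a set set \<Rightarrow> 'a set \<Rightarrow> 'a set \<Rightarrow> 'a set" where
  "tail S F N X = (THE C. C \<in> components S F (N - X) \<and> finite (N - C))"

definition neck_equiv :: "'a set \<Rightarrow> 'a set set \<Rightarrow> 'a set \<Rightarrow> 'a set \<Rightarrow> bool" where
  "neck_equiv S F N N' \<longleftrightarrow> (\<forall>X. finite X \<and> X \<subseteq> S \<longrightarrow>
     (\<exists>C\<in>components S F (S - X). tail S F N X \<subseteq> C \<and> tail S F N' X \<subseteq> C))"

definition ends :: "'a set \<Rightarrow> 'a set set \<Rightarrow> 'a set set set" where
  "ends S F = {{N'. necklace S F N' \<and> neck_equiv S F N N'} | N. necklace S F N}"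

definition Kend :: "'a set \<Rightarrow> 'a set set \<Rightarrow> 'a set \<Rightarrow> 'a set set \<Rightarrow> 'a set" where
  "Kend S F X \<omega> = (THE C. C \<in> components S F (S - X) \<and> (\<forall>N\<in>\<omega>. tail S F N X \<subseteq> C))"

text \<open>Directions, made extensional: undefined outside finite subsets of S.\<close>
definition direction :: "'a set \<Rightarrow> 'a set set \<Rightarrow> ('a set \<Rightarrow> 'a set) \<Rightarrow> bool" where
  "direction S F d \<longleftrightarrow>
     (\<forall>A. finite A \<and> A \<subseteq> S \<longrightarrow> d A \<in> components S F (S - A)) \<and>
     (\<forall>A B. finite B \<and> B \<subseteq> S \<and> A \<subseteq> B \<longrightarrow> d B \<subseteq> d A) \<and>
     (\<forall>A. \<not> (finite A \<and> A \<subseteq> S) \<longrightarrow> d A = undefined)"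

definition directions :: "'a set \<Rightarrow> 'a set set \<Rightarrow> ('a set \<Rightarrow> 'a set) set" where
  "directions S F = {d. direction S F d}"

end

theory Submission
  imports Defs
begin


locale cd =
  fixes S :: "'a set" and F :: "'a set set"
  assumes conn: "connectoid S F"
begin

lemma F_fin: "H \<in> F \<Longrightarrow> finite H" using conn unfolding connectoid_def by blast
lemma F_sub: "H \<in> F \<Longrightarrow> H \<subseteq> S" using conn unfolding connectoid_def by blast
lemma F_un: "H \<in> F \<Longrightarrow> H' \<in> F \<Longrightarrow> H \<inter> H' \<noteq> {} \<Longrightarrow> H \<union> H' \<in> F"
  using conn unfolding connectoid_def by blast
lemma F_single: "s \<in> S \<Longrightarrow> {s} \<in> F" using conn unfolding connectoid_def by blast

lemma F_conn: "H \<in> F \<Longrightarrow> connected_set S F H"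
  unfolding connected_set_def using F_sub by blast

lemma conn_sub: "connected_set S F C \<Longrightarrow> C \<subseteq> S" unfolding connected_set_def by blast

lemma conn_pair: "connected_set S F C \<Longrightarrow> x \<in> C \<Longrightarrow> y \<in> C \<Longrightarrow> \<exists>H\<in>F. H \<subseteq> C \<and> x \<in> H \<and> y \<in> H"
  unfolding connected_set_def by blast

lemma conn_un:
  assumes C: "connected_set S F C" and D: "connected_set S F D" and i: "C \<inter> D \<noteq> {}"
  shows "connected_set S F (C \<union> D)"
proof -
  obtain z where z: "z \<in> C" "z \<in> D" using i by blast
  have key: "\<exists>H\<in>F. H \<subseteq> C \<union> D \<and> x \<in> H \<and> y \<in> H" if xy0: "x \<in> C" "y \<in> D" for x y
  proof -
    obtain H1 where H1: "H1 \<in> F" "H1 \<subseteq> C" "x \<in> H1" "z \<in> H1" using conn_pair[OF C xy0(1) z(1)] by blast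
    obtain H2 where H2: "H2 \<in> F" "H2 \<subseteq> D" "z \<in> H2" "y \<in> H2" using conn_pair[OF D z(2) xy0(2)] by blast
    have "H1 \<inter> H2 \<noteq> {}" using H1(4) H2(3) by blast
    then have "H1 \<union> H2 \<in> F" using F_un[OF H1(1) H2(1)] by simp
    moreover have "H1 \<union> H2 \<subseteq> C \<union> D" using H1(2) H2(2) by blast
    ultimately show ?thesis using H1(3) H2(4) by blast
  qed
  have sub: "C \<union> D \<subseteq> S" using conn_sub[OF C] conn_sub[OF D] by blast
  have pair: "\<exists>H\<in>F. H \<subseteq> C \<union> D \<and> x \<in> H \<and> y \<in> H" if xy: "x \<in> C \<union> D" "y \<in> C \<union> D" for x y
  proof -
    have CC: ?thesis if cc: "x \<in> C" "y \<in> C"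
    proof -
      obtain H where "H \<in> F" "H \<subseteq> C" "x \<in> H" "y \<in> H" using conn_pair[OF C cc] by blast
      then show ?thesis by blast
    qed
    have DD: ?thesis if dd: "x \<in> D" "y \<in> D"
    proof -
      obtain H where "H \<in> F" "H \<subseteq> D" "x \<in> H" "y \<in> H" using conn_pair[OF D dd] by blast
      then show ?thesis by blast
    qed
    have CD: ?thesis if "x \<in> C" "y \<in> D" using key[OF that] .
    have DC: ?thesis if dc: "x \<in> D" "y \<in> C"
    proof -
      obtain H where "H \<in> F" "H \<subseteq> C \<union> D" "y \<in> H" "x \<in> H" using key[OF dc(2,1)] by blast
      then show ?thesis by blast
    qed
    show ?thesis using xy CC DD CD DC by blast
  qed
  show ?thesis unfolding connected_set_def using sub pair by blast
qed

lemma comp_props: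
  assumes "C \<in> components S F Y"
  shows "C \<noteq> {}" "C \<subseteq> Y" "connected_set S F C"
  using assms unfolding components_def by blast+

lemma comp_max:
  assumes "C \<in> components S F Y" "C \<subseteq> D" "D \<subseteq> Y" "connected_set S F D"
  shows "D = C"
  using assms unfolding components_def by blast

lemma comp_absorb:
  assumes C: "C \<in> components S F Y" and D: "connected_set S F D" "D \<subseteq> Y" and i: "C \<inter> D \<noteq> {}"
  shows "D \<subseteq> C"
proof -
  have "connected_set S F (C \<union> D)" using conn_un[OF comp_props(3)[OF C] D(1) i] .
  moreover have "C \<union> D \<subseteq> Y" using comp_props(2)[OF C] D(2) by blast
  ultimately have "C \<union> D = C" using comp_max[OF C] by blast
  then show ?thesis by blast
qed

lemma comp_disj:
  assumes "C \<in> components S F Y" "C' \<in> components S F Y" "C \<inter> C' \<noteq> {}"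
  shows "C = C'"
  using comp_absorb[OF assms(1) comp_props(3,2)[OF assms(2)] assms(3)]
    comp_absorb[OF assms(2) comp_props(3,2)[OF assms(1)]] assms(3) by blast

lemma comp_exists:
  assumes x: "x \<in> Y" and Y: "Y \<subseteq> S"
  shows "\<exists>C\<in>components S F Y. x \<in> C"
proof -
  define U where "U = \<Union>{D. connected_set S F D \<and> D \<subseteq> Y \<and> x \<in> D}"
  have sx: "connected_set S F {x}" using F_conn F_single x Y by blast
  have xU: "x \<in> U" using sx x unfolding U_def by blast
  have UY: "U \<subseteq> Y" unfolding U_def by blast
  have Uc: "connected_set S F U"
    unfolding connected_set_def
  proof (intro conjI ballI)
    show "U \<subseteq> S" using UY Y by blast
  next
    fix a b assume "a \<in> U" "b \<in> U"
    then obtain D1 D2 where D1: "connected_set S F D1" "D1 \<subseteq> Y" "x \<in> D1" "a \<in> D1"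
      and D2: "connected_set S F D2" "D2 \<subseteq> Y" "x \<in> D2" "b \<in> D2" unfolding U_def by blast
    have "connected_set S F (D1 \<union> D2)" using conn_un[OF D1(1) D2(1)] D1 D2 by blast
    then obtain H where "H \<in> F" "H \<subseteq> D1 \<union> D2" "a \<in> H" "b \<in> H" using conn_pair D1 D2 by blast
    moreover have "D1 \<union> D2 \<subseteq> U" using D1 D2 unfolding U_def by blast
    ultimately show "\<exists>H\<in>F. H \<subseteq> U \<and> a \<in> H \<and> b \<in> H" by blast
  qed
  have "U \<in> components S F Y"
    unfolding components_def
  proof (intro CollectI conjI allI impI)
    show "U \<noteq> {}" using xU by blast
    show "U \<subseteq> Y" by (rule UY)
    show "connected_set S F U" by (rule Uc)
    fix D assume "U \<subseteq> D \<and> D \<subseteq> Y \<and> connected_set S F D"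
    then have "D \<subseteq> U" using xU unfolding U_def by blast
    then show "D = U" using \<open>U \<subseteq> D \<and> D \<subseteq> Y \<and> connected_set S F D\<close> by blast
  qed
  then show ?thesis using xU by blast
qed

lemma conn_in_comp:
  assumes "connected_set S F D" "D \<subseteq> Y" "D \<noteq> {}" "Y \<subseteq> S"
  shows "\<exists>C\<in>components S F Y. D \<subseteq> C"
proof -
  obtain x where x: "x \<in> D" using assms(3) by blast
  obtain C where C: "C \<in> components S F Y" "x \<in> C" using comp_exists[of x Y] x assms(2,4) by blast
  then show ?thesis using comp_absorb[OF C(1) assms(1,2)] x by blast
qed

end


definition chain :: "'a set set \<Rightarrow> (nat \<Rightarrow> 'a set) \<Rightarrow> bool" where
  "chain F K \<longleftrightarrow> (\<forall>n. K n \<in> F) \<and> (\<forall>i j. K i \<inter> K j \<noteq> {} \<longleftrightarrow> i \<le> j + 1 \<and> j \<le> i + 1)"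

context cd begin

lemma chain_F: "chain F K \<Longrightarrow> K n \<in> F" unfolding chain_def by blast

lemma chain_ne: "chain F K \<Longrightarrow> K n \<noteq> {}"
  unfolding chain_def by (metis inf.idem le_add1)

lemma chain_idx: "chain F K \<Longrightarrow> x \<in> K i \<Longrightarrow> x \<in> K j \<Longrightarrow> j \<le> i + 1"
  unfolding chain_def by blast

lemma chain_avoid:
  assumes K: "chain F K" and X: "finite X"
  shows "\<exists>M. \<forall>m\<ge>M. K m \<inter> X = {}"
  using X
proof (induction X rule: finite_induct)
  case empty
  then show ?case by blast
next
  case (insert x X)
  then obtain M where M: "\<forall>m\<ge>M. K m \<inter> X = {}" by blast
  show ?case
  proof (cases "\<exists>i. x \<in> K i")
    case True
    then obtain i where i: "x \<in> K i" by blast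
    have "\<forall>m\<ge>max M (i+2). K m \<inter> insert x X = {}"
    proof (intro allI impI)
      fix m assume m: "m \<ge> max M (i+2)"
      have "x \<notin> K m" using chain_idx[OF K i, of m] m by auto
      then show "K m \<inter> insert x X = {}" using M m by auto
    qed
    then show ?thesis by blast
  next
    case False
    then show ?thesis using M by blast
  qed
qed

lemma chain_seg:
  assumes K: "chain F K"
  shows "i \<le> j \<Longrightarrow> (\<Union>k\<in>{i..j}. K k) \<in> F"
proof (induction j)
  case 0
  then show ?case using chain_F[OF K] by simp
next
  case (Suc j)
  show ?case
  proof (cases "i \<le> j")
    case True
    have eq: "{i..Suc j} = insert (Suc j) {i..j}" using True by auto
    have A: "(\<Union>k\<in>{i..j}. K k) \<in> F" using Suc.IH True by blast
    have "K j \<inter> K (Suc j) \<noteq> {}" using K unfolding chain_def by simp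
    moreover have "K j \<subseteq> (\<Union>k\<in>{i..j}. K k)" using True by (intro UN_upper) simp
    ultimately have "(\<Union>k\<in>{i..j}. K k) \<inter> K (Suc j) \<noteq> {}" by blast
    then have "(\<Union>k\<in>{i..j}. K k) \<union> K (Suc j) \<in> F" using F_un[OF A chain_F[OF K]] by blast
    then show ?thesis using eq by (simp add: Un_commute)
  next
    case False
    then have "i = Suc j" using Suc.prems by simp
    then show ?thesis using chain_F[OF K] by simp
  qed
qed

lemma chain_conn:
  assumes K: "chain F K"
  shows "connected_set S F (\<Union>k\<in>{M..}. K k)"
  unfolding connected_set_def
proof (intro conjI ballI)
  show "(\<Union>k\<in>{M..}. K k) \<subseteq> S" using F_sub chain_F[OF K] by blast
next
  fix x y assume "x \<in> (\<Union>k\<in>{M..}. K k)" "y \<in> (\<Union>k\<in>{M..}. K k)"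
  then obtain i j where ij: "i \<ge> M" "j \<ge> M" "x \<in> K i" "y \<in> K j" by auto
  let ?a = "min i j" and ?b = "max i j"
  have "(\<Union>k\<in>{?a..?b}. K k) \<in> F" using chain_seg[OF K] by simp
  moreover have "(\<Union>k\<in>{?a..?b}. K k) \<subseteq> (\<Union>k\<in>{M..}. K k)" using ij by (auto simp: atLeast_iff) (metis atLeast_iff le_trans min.bounded_iff)
  moreover have "x \<in> (\<Union>k\<in>{?a..?b}. K k)" "y \<in> (\<Union>k\<in>{?a..?b}. K k)" using ij by auto
  ultimately show "\<exists>H\<in>F. H \<subseteq> (\<Union>k\<in>{M..}. K k) \<and> x \<in> H \<and> y \<in> H" by blast
qed

lemma chain_inf:
  assumes K: "chain F K"
  shows "infinite (\<Union>k\<in>{M..}. K k)"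
proof
  assume f: "finite (\<Union>k\<in>{M..}. K k)"
  obtain M' where M': "\<forall>m\<ge>M'. K m \<inter> (\<Union>k\<in>{M..}. K k) = {}" using chain_avoid[OF K f] by blast
  let ?m = "max M M'"
  have a: "K ?m \<inter> (\<Union>k\<in>{M..}. K k) = {}" using M' by (meson max.cobounded2)
  have b: "K ?m \<subseteq> (\<Union>k\<in>{M..}. K k)" by (rule UN_upper) simp
  have c: "K ?m \<noteq> {}" by (rule chain_ne[OF K])
  from a b c show False by blast
qed

lemma necklace_iff: "necklace S F N \<longleftrightarrow> (\<exists>K. chain F K \<and> N = (\<Union>n. K n))"
proof
  assume "necklace S F N"
  then show "\<exists>K. chain F K \<and> N = (\<Union>n. K n)" unfolding necklace_def chain_def by blast
next
  assume "\<exists>K. chain F K \<and> N = (\<Union>n. K n)"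
  then obtain K where K: "chain F K" "N = (\<Union>n. K n)" by blast
  have "connected_set S F (\<Union>k\<in>{0..}. K k)" by (rule chain_conn[OF K(1)])
  then have "connected_set S F N" using K(2) by simp
  then show "necklace S F N" unfolding necklace_def using K unfolding chain_def by blast
qed

lemma necklace_inf: "necklace S F N \<Longrightarrow> infinite N"
  using necklace_iff chain_inf[of _ 0] by fastforce

lemma necklace_sub: "necklace S F N \<Longrightarrow> N \<subseteq> S"
  unfolding necklace_def connected_set_def by blast

lemma tail_props:
  assumes N: "necklace S F N" and X: "finite X"
  shows "tail S F N X \<in> components S F (N - X) \<and> finite (N - tail S F N X)"
proof -
  obtain K where K: "chain F K" "N = (\<Union>n. K n)" using N necklace_iff by blast
  obtain M where M: "\<forall>m\<ge>M. K m \<inter> X = {}" using chain_avoid[OF K(1) X] by blast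
  let ?U = "\<Union>k\<in>{M..}. K k"
  have Uc: "connected_set S F ?U" by (rule chain_conn[OF K(1)])
  have UX: "?U \<subseteq> N - X" using M K(2) by auto
  have Une: "?U \<noteq> {}" using chain_ne[OF K(1), of M] by auto
  have NS: "N - X \<subseteq> S" using necklace_sub[OF N] by blast
  obtain C where C: "C \<in> components S F (N - X)" "?U \<subseteq> C" using conn_in_comp[OF Uc UX Une NS] by blast
  have "N - C \<subseteq> (\<Union>k\<in>{..<M}. K k)"
  proof
    fix x assume "x \<in> N - C"
    then obtain k where "x \<in> K k" "x \<notin> C" using K(2) by auto
    then have "k < M" using C(2) by (meson UnionI atLeast_iff imageI not_le_imp_less subsetD UN_I)
    then show "x \<in> (\<Union>k\<in>{..<M}. K k)" using \<open>x \<in> K k\<close> by auto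
  qed
  moreover have "finite (\<Union>k\<in>{..<M}. K k)" using F_fin chain_F[OF K(1)] by blast
  ultimately have fin: "finite (N - C)" by (rule finite_subset)
  have ninf: "infinite N" using necklace_inf[OF N] .
  have uniq: "C' = C" if C': "C' \<in> components S F (N - X)" "finite (N - C')" for C'
  proof (rule ccontr)
    assume "C' \<noteq> C"
    then have "C' \<inter> C = {}" using comp_disj[OF C'(1) C(1)] by blast
    then have "N \<subseteq> (N - C) \<union> (N - C')" by blast
    then show False using fin C'(2) ninf finite_subset by blast
  qed
  have "tail S F N X = C" unfolding tail_def
    by (rule the_equality) (use C fin uniq in blast)+
  then show ?thesis using C fin by simp
qed

lemma tail_basic:
  assumes N: "necklace S F N" and X: "finite X"
  shows "tail S F N X \<noteq> {}" "tail S F N X \<subseteq> N - X" "connected_set S F (tail S F N X)"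
        "infinite (tail S F N X)" "finite (N - tail S F N X)"
proof -
  have t: "tail S F N X \<in> components S F (N - X)" "finite (N - tail S F N X)" using tail_props[OF N X] by blast+
  show "tail S F N X \<noteq> {}" "tail S F N X \<subseteq> N - X" "connected_set S F (tail S F N X)"
    using comp_props[OF t(1)] by blast+
  show "finite (N - tail S F N X)" by (rule t(2))
  show "infinite (tail S F N X)"
  proof
    assume "finite (tail S F N X)"
    then have "finite ((N - tail S F N X) \<union> tail S F N X)" using t(2) by blast
    moreover have "N \<subseteq> (N - tail S F N X) \<union> tail S F N X" by blast
    ultimately show False using necklace_inf[OF N] finite_subset by blast
  qed
qed

end


context cd begin

lemma tail_in_comp:
  assumes N: "necklace S F N" and X: "finite X"
  shows "\<exists>C\<in>components S F (S - X). tail S F N X \<subseteq> C"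
proof -
  note t = tail_basic[OF N X]
  have s: "tail S F N X \<subseteq> S - X" using t(2) necklace_sub[OF N] by blast
  have "S - X \<subseteq> S" by blast
  from conn_in_comp[OF t(3) s t(1) this] show ?thesis .
qed

lemma neq_refl: assumes N: "necklace S F N" shows "neck_equiv S F N N"
  unfolding neck_equiv_def
proof (intro allI impI)
  fix X assume "finite X \<and> X \<subseteq> S"
  then obtain C where "C \<in> components S F (S - X)" "tail S F N X \<subseteq> C" using tail_in_comp[OF N] by blast
  then show "\<exists>C\<in>components S F (S - X). tail S F N X \<subseteq> C \<and> tail S F N X \<subseteq> C" by blast
qed

lemma neq_sym: assumes a: "neck_equiv S F N N'" shows "neck_equiv S F N' N"
  unfolding neck_equiv_def
proof (intro allI impI)
  fix X assume X: "finite X \<and> X \<subseteq> S"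
  have "\<exists>C\<in>components S F (S - X). tail S F N X \<subseteq> C \<and> tail S F N' X \<subseteq> C"
    using a X unfolding neck_equiv_def by simp
  then obtain C where "C\<in>components S F (S - X)" "tail S F N X \<subseteq> C" "tail S F N' X \<subseteq> C" by blast
  then show "\<exists>C\<in>components S F (S - X). tail S F N' X \<subseteq> C \<and> tail S F N X \<subseteq> C" by blast
qed

lemma neq_trans:
  assumes N2: "necklace S F N2" and a: "neck_equiv S F N1 N2" and b: "neck_equiv S F N2 N3"
  shows "neck_equiv S F N1 N3"
  unfolding neck_equiv_def
proof (intro allI impI)
  fix X assume X: "finite X \<and> X \<subseteq> S"
  have a': "\<exists>C\<in>components S F (S - X). tail S F N1 X \<subseteq> C \<and> tail S F N2 X \<subseteq> C"
    using a X unfolding neck_equiv_def by simp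
  have b': "\<exists>C\<in>components S F (S - X). tail S F N2 X \<subseteq> C \<and> tail S F N3 X \<subseteq> C"
    using b X unfolding neck_equiv_def by simp
  obtain C where C: "C \<in> components S F (S - X)" "tail S F N1 X \<subseteq> C" "tail S F N2 X \<subseteq> C"
    using a' by blast
  obtain C' where C': "C' \<in> components S F (S - X)" "tail S F N2 X \<subseteq> C'" "tail S F N3 X \<subseteq> C'"
    using b' by blast
  have "tail S F N2 X \<noteq> {}" using tail_basic(1)[OF N2] X by simp
  then have "C \<inter> C' \<noteq> {}" using C(3) C'(2) by blast
  then have "C = C'" using comp_disj[OF C(1) C'(1)] by simp
  then show "\<exists>C\<in>components S F (S - X). tail S F N1 X \<subseteq> C \<and> tail S F N3 X \<subseteq> C" using C C' by blast
qed

lemma ends_elim: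
  assumes "\<omega> \<in> ends S F"
  obtains N where "necklace S F N" "\<omega> = {N'. necklace S F N' \<and> neck_equiv S F N N'}"
  using assms unfolding ends_def by auto

lemma Kend_char:
  assumes N: "necklace S F N" and w: "\<omega> = {N'. necklace S F N' \<and> neck_equiv S F N N'}"
    and A: "finite A" "A \<subseteq> S"
    and C: "C \<in> components S F (S - A)" "tail S F N A \<subseteq> C"
  shows "Kend S F A \<omega> = C"
proof -
  have tne: "tail S F N A \<noteq> {}" using tail_basic(1)[OF N A(1)] .
  have all: "\<forall>N'\<in>\<omega>. tail S F N' A \<subseteq> C"
  proof
    fix N' assume "N' \<in> \<omega>"
    then have "neck_equiv S F N N'" using w by blast
    then obtain C' where C': "C' \<in> components S F (S - A)" "tail S F N A \<subseteq> C'" "tail S F N' A \<subseteq> C'"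
      using A unfolding neck_equiv_def by blast
    have "C' = C" using comp_disj[OF C'(1) C(1)] C'(2) C(2) tne by blast
    then show "tail S F N' A \<subseteq> C" using C' by blast
  qed
  have Nw: "N \<in> \<omega>" using w N neq_refl by blast
  show ?thesis unfolding Kend_def
  proof (rule the_equality)
    show "C \<in> components S F (S - A) \<and> (\<forall>N\<in>\<omega>. tail S F N A \<subseteq> C)" using C all by blast
  next
    fix C1 assume "C1 \<in> components S F (S - A) \<and> (\<forall>N\<in>\<omega>. tail S F N A \<subseteq> C1)"
    then have c1: "C1 \<in> components S F (S - A)" and c2: "tail S F N A \<subseteq> C1" using Nw by blast+
    have "C1 \<inter> C \<noteq> {}" using c2 C(2) tne by blast
    then show "C1 = C" using comp_disj[OF c1 C(1)] by blast
  qed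
qed

lemma Kend_props:
  assumes N: "necklace S F N" and w: "\<omega> = {N'. necklace S F N' \<and> neck_equiv S F N N'}"
    and A: "finite A" "A \<subseteq> S"
  shows "Kend S F A \<omega> \<in> components S F (S - A)" "tail S F N A \<subseteq> Kend S F A \<omega>"
proof -
  obtain C where C: "C \<in> components S F (S - A)" "tail S F N A \<subseteq> C" using tail_in_comp[OF N A(1)] by blast
  have "Kend S F A \<omega> = C" by (rule Kend_char[OF N w A C])
  then show "Kend S F A \<omega> \<in> components S F (S - A)" "tail S F N A \<subseteq> Kend S F A \<omega>" using C by auto
qed

lemma tail_mono:
  assumes N: "necklace S F N" and B: "finite B" and AB: "A \<subseteq> B"
  shows "tail S F N B \<subseteq> tail S F N A"
proof -
  have A: "finite A" using B AB finite_subset by blast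
  note tA = tail_props[OF N A] and tB = tail_basic[OF N B]
  have "tail S F N B \<inter> tail S F N A \<noteq> {}"
  proof
    assume "tail S F N B \<inter> tail S F N A = {}"
    then have "tail S F N B \<subseteq> N - tail S F N A" using tB(2) by blast
    then show False using tB(4) tA finite_subset by blast
  qed
  moreover have "tail S F N B \<subseteq> N - A" using tB(2) AB by blast
  ultimately show ?thesis using comp_absorb[OF conjunct1[OF tA] tB(3)] by blast
qed

definition dirof :: "'a set set \<Rightarrow> 'a set \<Rightarrow> 'a set" where
  "dirof \<omega> = (\<lambda>A. if finite A \<and> A \<subseteq> S then Kend S F A \<omega> else undefined)"

lemma dirof_dir:
  assumes w0: "\<omega> \<in> ends S F"
  shows "direction S F (dirof \<omega>)"
proof -
  obtain N where N: "necklace S F N" and w: "\<omega> = {N'. necklace S F N' \<and> neck_equiv S F N N'}"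
    using ends_elim[OF w0] by blast
  show ?thesis unfolding direction_def
  proof (intro conjI allI impI)
    fix A assume "finite A \<and> A \<subseteq> S"
    then show "dirof \<omega> A \<in> components S F (S - A)" unfolding dirof_def using Kend_props(1)[OF N w] by simp
  next
    fix A assume "\<not> (finite A \<and> A \<subseteq> S)"
    then show "dirof \<omega> A = undefined" unfolding dirof_def by auto
  next
    fix A B assume ab: "finite B \<and> B \<subseteq> S \<and> A \<subseteq> B"
    then have A: "finite A" "A \<subseteq> S" using finite_subset by blast+
    have B: "finite B" "B \<subseteq> S" using ab by blast+
    have kB: "Kend S F B \<omega> \<in> components S F (S - B)" "tail S F N B \<subseteq> Kend S F B \<omega>" using Kend_props[OF N w B] by blast+
    have kA: "Kend S F A \<omega> \<in> components S F (S - A)" "tail S F N A \<subseteq> Kend S F A \<omega>" using Kend_props[OF N w A] by blast+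
    have "tail S F N B \<subseteq> tail S F N A" using tail_mono[OF N B(1)] ab by blast
    moreover have "tail S F N B \<noteq> {}" using tail_basic(1)[OF N B(1)] .
    ultimately have "Kend S F A \<omega> \<inter> Kend S F B \<omega> \<noteq> {}" using kA kB by blast
    moreover have "Kend S F B \<omega> \<subseteq> S - A" using comp_props(2)[OF kB(1)] ab by blast
    ultimately have "Kend S F B \<omega> \<subseteq> Kend S F A \<omega>" using comp_absorb[OF kA(1) comp_props(3)[OF kB(1)]] by blast
    then show "dirof \<omega> B \<subseteq> dirof \<omega> A" unfolding dirof_def using A B by simp
  qed
qed

lemma dir_undef: "direction S F d \<Longrightarrow> \<not> (finite A \<and> A \<subseteq> S) \<Longrightarrow> d A = undefined"
  unfolding direction_def by blast

lemma dir_unique: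
  assumes "direction S F d" "\<forall>A. finite A \<and> A \<subseteq> S \<longrightarrow> d A = Kend S F A \<omega>"
  shows "d = dirof \<omega>"
proof
  fix A show "d A = dirof \<omega> A"
    using assms dir_undef[OF assms(1)] unfolding dirof_def by auto
qed

lemma dirof_inj:
  assumes w1: "\<omega>1 \<in> ends S F" and w2: "\<omega>2 \<in> ends S F" and eq: "dirof \<omega>1 = dirof \<omega>2"
  shows "\<omega>1 = \<omega>2"
proof -
  obtain N1 where N1: "necklace S F N1" and e1: "\<omega>1 = {N'. necklace S F N' \<and> neck_equiv S F N1 N'}"
    using ends_elim[OF w1] by blast
  obtain N2 where N2: "necklace S F N2" and e2: "\<omega>2 = {N'. necklace S F N' \<and> neck_equiv S F N2 N'}"
    using ends_elim[OF w2] by blast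
  have "neck_equiv S F N1 N2" unfolding neck_equiv_def
  proof (intro allI impI)
    fix X assume X: "finite X \<and> X \<subseteq> S"
    have "Kend S F X \<omega>1 = Kend S F X \<omega>2" using fun_cong[OF eq, of X] X unfolding dirof_def by simp
    then show "\<exists>C\<in>components S F (S - X). tail S F N1 X \<subseteq> C \<and> tail S F N2 X \<subseteq> C"
      using Kend_props[OF N1 e1] Kend_props[OF N2 e2] X by metis
  qed
  then have "\<forall>N'. neck_equiv S F N1 N' \<longleftrightarrow> neck_equiv S F N2 N'"
    using neq_trans neq_sym N1 N2 by blast
  then show ?thesis using e1 e2 by blast
qed

end


locale dcd = cd S F for S :: "'a set" and F :: "'a set set" +
  fixes d :: "'a set \<Rightarrow> 'a set"
  assumes dir: "direction S F d"
begin

lemma dir1: "\<forall>A. finite A \<and> A \<subseteq> S \<longrightarrow> d A \<in> components S F (S - A)"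
  using dir unfolding direction_def by (rule conjunct1)

lemma dir2: "\<forall>A B. finite B \<and> B \<subseteq> S \<and> A \<subseteq> B \<longrightarrow> d B \<subseteq> d A"
  using dir unfolding direction_def by (elim conjE)

lemma d_comp: "finite A \<Longrightarrow> A \<subseteq> S \<Longrightarrow> d A \<in> components S F (S - A)"
  using dir1 by simp

lemma d_mono: "finite B \<Longrightarrow> B \<subseteq> S \<Longrightarrow> A \<subseteq> B \<Longrightarrow> d B \<subseteq> d A"
  using dir2 by simp

lemma d_basic:
  assumes "finite A" "A \<subseteq> S"
  shows "d A \<noteq> {}" "d A \<subseteq> S - A" "connected_set S F (d A)"
  using comp_props[OF d_comp[OF assms]] by blast+

lemma d_sub2:
  assumes X: "finite X" "X \<subseteq> S" and Y: "finite Y" "Y \<subseteq> S" and dis: "d Y \<inter> X = {}"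
  shows "d Y \<subseteq> d X"
proof -
  have XY: "finite (X \<union> Y)" "X \<union> Y \<subseteq> S" using X Y by auto
  have "d (X \<union> Y) \<subseteq> d X" "d (X \<union> Y) \<subseteq> d Y" using d_mono[OF XY] by blast+
  moreover have "d (X \<union> Y) \<noteq> {}" using d_basic(1)[OF XY] .
  ultimately have i: "d X \<inter> d Y \<noteq> {}" by blast
  have s: "d Y \<subseteq> S - X" using d_basic(2)[OF Y] dis by blast
  show ?thesis using comp_absorb[OF d_comp[OF X] d_basic(3)[OF Y] s i] .
qed

definition pt :: "('a set \<Rightarrow> 'a set) \<Rightarrow> 'a set \<Rightarrow> 'a" where
  "pt c X = (SOME p. p \<in> c X)"

definition bead :: "('a set \<Rightarrow> 'a set) \<Rightarrow> 'a set \<Rightarrow> 'a set \<Rightarrow> 'a set" where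
  "bead c X X' = (SOME K. K \<in> F \<and> K \<subseteq> d X \<and> pt c X \<in> K \<and> pt c X' \<in> K)"

primrec bst :: "('a set \<Rightarrow> 'a set) \<Rightarrow> (nat \<Rightarrow> 'a set) \<Rightarrow> nat \<Rightarrow> 'a set \<times> 'a set" where
  "bst c Z 0 = (Z 0, {})"
| "bst c Z (Suc m) = (fst (bst c Z m) \<union> Z (Suc m) \<union> c (fst (bst c Z m)) \<union> snd (bst c Z m),
      bead c (fst (bst c Z m)) (fst (bst c Z m) \<union> Z (Suc m) \<union> c (fst (bst c Z m)) \<union> snd (bst c Z m)))"

lemma disj_avoid:
  fixes T :: "nat \<Rightarrow> 'a set"
  assumes T: "\<forall>m n. m \<noteq> n \<longrightarrow> T m \<inter> T n = {}" and X: "finite X"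
  shows "\<exists>M. \<forall>m\<ge>M. T m \<inter> X = {}"
  using X
proof (induction X rule: finite_induct)
  case empty
  then show ?case by blast
next
  case (insert x X)
  then obtain M where M: "\<forall>m\<ge>M. T m \<inter> X = {}" by blast
  show ?case
  proof (cases "\<exists>i. x \<in> T i")
    case True
    then obtain i where i: "x \<in> T i" by blast
    have "\<forall>m\<ge>max M (i+1). T m \<inter> insert x X = {}"
    proof (intro allI impI)
      fix m assume m: "m \<ge> max M (i+1)"
      then have "m \<noteq> i" by simp
      then have "x \<notin> T m" using T i by blast
      then show "T m \<inter> insert x X = {}" using M m by auto
    qed
    then show ?thesis by blast
  next
    case False
    then show ?thesis using M by blast
  qed
qed

lemma build:
  assumes c: "\<And>X. finite X \<Longrightarrow> X \<subseteq> S \<Longrightarrow> finite (c X) \<and> c X \<noteq> {} \<and> c X \<subseteq> d X"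
    and Z: "\<And>n. finite (Z n) \<and> Z n \<subseteq> S"
  shows "\<exists>K Xs. chain F K \<and> (\<forall>m. finite (Xs m) \<and> Xs m \<subseteq> S) \<and> (\<forall>m. Z m \<subseteq> Xs m)
     \<and> (\<forall>m n. m \<le> n \<longrightarrow> Xs m \<subseteq> Xs n) \<and> (\<forall>m. K m \<inter> c (Xs m) \<noteq> {})
     \<and> (\<forall>m n. m < n \<longrightarrow> c (Xs m) \<subseteq> Xs n)"
proof -
  define Xs where "Xs m = fst (bst c Z m)" for m
  define K where "K m = snd (bst c Z (Suc m))" for m
  define P where "P m = snd (bst c Z m)" for m
  have XS: "Xs (Suc m) = Xs m \<union> Z (Suc m) \<union> c (Xs m) \<union> P m" for m
    unfolding Xs_def P_def by simp
  have KS: "K m = bead c (Xs m) (Xs (Suc m))" for m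
    unfolding K_def Xs_def by simp
  have PS: "P (Suc m) = K m" for m unfolding P_def K_def by simp
  have pt_in: "pt c X \<in> c X" if "finite X" "X \<subseteq> S" for X
    unfolding pt_def using c[OF that] by (simp add: some_in_eq)
  have bead_ok: "bead c X X' \<in> F \<and> bead c X X' \<subseteq> d X \<and> pt c X \<in> bead c X X' \<and> pt c X' \<in> bead c X X'"
    if X: "finite X" "X \<subseteq> S" and X': "finite X'" "X' \<subseteq> S" and XX: "X \<subseteq> X'" for X X'
  proof -
    have p1: "pt c X \<in> d X" using pt_in[OF X] c[OF X] by blast
    have "pt c X' \<in> d X'" using pt_in[OF X'] c[OF X'] by blast
    then have p2: "pt c X' \<in> d X" using d_mono[OF X' XX] by blast
    obtain H where "H \<in> F" "H \<subseteq> d X" "pt c X \<in> H" "pt c X' \<in> H"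
      using conn_pair[OF d_basic(3)[OF X] p1 p2] by blast
    then have "\<exists>K. K \<in> F \<and> K \<subseteq> d X \<and> pt c X \<in> K \<and> pt c X' \<in> K" by blast
    then show ?thesis unfolding bead_def by (rule someI_ex)
  qed
  have inv: "finite (Xs m) \<and> Xs m \<subseteq> S \<and> finite (P m) \<and> P m \<subseteq> S" for m
  proof (induction m)
    case 0
    then show ?case unfolding Xs_def P_def using Z by simp
  next
    case (Suc m)
    have cm: "finite (c (Xs m)) \<and> c (Xs m) \<subseteq> S" using c[of "Xs m"] Suc d_basic(2)[of "Xs m"] by blast
    have x1: "finite (Xs (Suc m)) \<and> Xs (Suc m) \<subseteq> S" unfolding XS using Suc cm Z[of "Suc m"] by blast
    have "Xs m \<subseteq> Xs (Suc m)" unfolding XS by blast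
    then have "K m \<in> F" unfolding KS using bead_ok[of "Xs m" "Xs (Suc m)"] Suc x1 by blast
    then show ?case using x1 PS F_fin F_sub by simp
  qed
  have Xfin: "finite (Xs m)" "Xs m \<subseteq> S" for m using inv by blast+
  have Xstep: "Xs m \<subseteq> Xs (Suc m)" for m unfolding XS by blast
  have Xmono: "m \<le> n \<Longrightarrow> Xs m \<subseteq> Xs n" for m n
    using lift_Suc_mono_le[of Xs, OF Xstep] by blast
  have Kok: "K m \<in> F" "K m \<subseteq> d (Xs m)" "pt c (Xs m) \<in> K m" "pt c (Xs (Suc m)) \<in> K m" for m
    unfolding KS using bead_ok[OF Xfin(1,2) Xfin(1,2) Xstep] by blast+
  have Kin: "K m \<subseteq> Xs (Suc (Suc m))" for m using XS[of "Suc m"] PS[of m] by blast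
  have cin: "m < n \<Longrightarrow> c (Xs m) \<subseteq> Xs n" for m n
  proof -
    assume "m < n"
    then have "Suc m \<le> n" by simp
    then have "Xs (Suc m) \<subseteq> Xs n" by (rule Xmono)
    moreover have "c (Xs m) \<subseteq> Xs (Suc m)" unfolding XS by blast
    ultimately show ?thesis by blast
  qed
  have Zin: "Z m \<subseteq> Xs m" for m
  proof (cases m)
    case 0
    then show ?thesis unfolding Xs_def by simp
  next
    case (Suc k)
    then show ?thesis using XS[of k] by blast
  qed
  have far: "K i \<inter> K j = {}" if ij2: "i + 2 \<le> j" for i j
  proof -
    have "K i \<subseteq> Xs j" using Kin[of i] Xmono[of "Suc (Suc i)" j] ij2 by simp
    moreover have "K j \<subseteq> S - Xs j" using Kok(2)[of j] d_basic(2)[OF Xfin(1,2)] by blast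
    ultimately show ?thesis by blast
  qed
  have near: "K i \<inter> K j \<noteq> {}" if ij: "i \<le> j + 1" "j \<le> i + 1" for i j
  proof -
    consider "j = i" | "j = Suc i" | "i = Suc j" using ij by linarith
    then show ?thesis
    proof cases
      case 1 then show ?thesis using Kok(3)[of i] by blast
    next
      case 2 then show ?thesis using Kok(4)[of i] Kok(3)[of "Suc i"] by blast
    next
      case 3 then show ?thesis using Kok(4)[of j] Kok(3)[of "Suc j"] by blast
    qed
  qed
  have ch: "chain F K" unfolding chain_def
  proof (intro conjI allI)
    fix n show "K n \<in> F" by (rule Kok(1))
  next
    fix i j show "K i \<inter> K j \<noteq> {} \<longleftrightarrow> i \<le> j + 1 \<and> j \<le> i + 1"
    proof
      assume a: "K i \<inter> K j \<noteq> {}"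
      show "i \<le> j + 1 \<and> j \<le> i + 1"
      proof (rule ccontr)
        assume "\<not> (i \<le> j + 1 \<and> j \<le> i + 1)"
        then have "i + 2 \<le> j \<or> j + 2 \<le> i" by linarith
        then show False using far[of i j] far[of j i] a by blast
      qed
    next
      assume "i \<le> j + 1 \<and> j \<le> i + 1"
      then show "K i \<inter> K j \<noteq> {}" using near by blast
    qed
  qed
  have meet: "K m \<inter> c (Xs m) \<noteq> {}" for m using Kok(3)[of m] pt_in[OF Xfin(1,2)] by blast
  show ?thesis
    apply (rule exI[of _ K], rule exI[of _ Xs])
    using ch Xfin Zin Xmono meet cin by blast
qed

end


context dcd begin

lemma conv_neck:
  assumes K: "chain F K"
    and cv: "\<And>X. finite X \<Longrightarrow> X \<subseteq> S \<Longrightarrow> \<exists>M. \<forall>m\<ge>M. K m \<inter> d X \<noteq> {}"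
  shows "\<exists>N. necklace S F N \<and> (\<forall>X. finite X \<and> X \<subseteq> S \<longrightarrow> finite (N - d X))"
proof -
  define N where "N = (\<Union>n. K n)"
  have Nn: "necklace S F N" unfolding necklace_iff N_def using K by blast
  have "finite (N - d X)" if X: "finite X" "X \<subseteq> S" for X
  proof -
    obtain M1 where M1: "\<forall>m\<ge>M1. K m \<inter> d X \<noteq> {}" using cv[OF X] by blast
    obtain M2 where M2: "\<forall>m\<ge>M2. K m \<inter> X = {}" using chain_avoid[OF K X(1)] by blast
    have in_d: "K m \<subseteq> d X" if m: "m \<ge> max M1 M2" for m
    proof -
      have a: "K m \<inter> d X \<noteq> {}" using M1 m by simp
      have b: "K m \<inter> X = {}" using M2 m by simp
      have s: "K m \<subseteq> S - X" using b F_sub[OF chain_F[OF K]] by blast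
      have i: "d X \<inter> K m \<noteq> {}" using a by blast
      show ?thesis using comp_absorb[OF d_comp[OF X] F_conn[OF chain_F[OF K]] s i] .
    qed
    have "N - d X \<subseteq> (\<Union>k\<in>{..<max M1 M2}. K k)"
    proof
      fix x assume x: "x \<in> N - d X"
      then obtain k where k: "x \<in> K k" "x \<notin> d X" unfolding N_def by blast
      have "\<not> k \<ge> max M1 M2" using in_d k by blast
      then show "x \<in> (\<Union>k\<in>{..<max M1 M2}. K k)" using k(1) by auto
    qed
    moreover have "finite (\<Union>k\<in>{..<max M1 M2}. K k)" using F_fin[OF chain_F[OF K]] by simp
    ultimately show ?thesis using finite_subset by blast
  qed
  then show ?thesis using Nn by blast
qed

definition JJ :: "'a set \<Rightarrow> bool" where
  "JJ T \<longleftrightarrow> finite T \<and> T \<noteq> {} \<and> T \<subseteq> S \<and> (\<forall>W. finite W \<and> W \<subseteq> S \<and> W \<inter> T = {} \<longrightarrow> T \<subseteq> d W)"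

lemma caseA:
  assumes A: "\<And>X. finite X \<Longrightarrow> X \<subseteq> S \<Longrightarrow> \<exists>T. JJ T \<and> T \<subseteq> d X"
  shows "\<exists>N. necklace S F N \<and> (\<forall>X. finite X \<and> X \<subseteq> S \<longrightarrow> finite (N - d X))"
proof -
  define c where "c X = (SOME T. JJ T \<and> T \<subseteq> d X)" for X
  have cJ: "JJ (c X) \<and> c X \<subseteq> d X" if "finite X" "X \<subseteq> S" for X
    unfolding c_def using A[OF that] by (rule someI_ex)
  have cprop: "finite (c X) \<and> c X \<noteq> {} \<and> c X \<subseteq> d X" if "finite X" "X \<subseteq> S" for X
    using cJ[OF that] unfolding JJ_def by blast
  have Z: "finite ((\<lambda>_. {}) n) \<and> (\<lambda>_. {}) n \<subseteq> S" for n :: nat by simp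
  have bex: "\<exists>K Xs. chain F K \<and> (\<forall>m. finite (Xs m) \<and> Xs m \<subseteq> S) \<and> (\<forall>m. (\<lambda>_. {}) m \<subseteq> Xs m)
     \<and> (\<forall>m n. m \<le> n \<longrightarrow> Xs m \<subseteq> Xs n) \<and> (\<forall>m. K m \<inter> c (Xs m) \<noteq> {})
     \<and> (\<forall>m n. m < n \<longrightarrow> c (Xs m) \<subseteq> Xs n)"
  proof (rule build)
    fix X :: "'a set" assume "finite X" "X \<subseteq> S"
    then show "finite (c X) \<and> c X \<noteq> {} \<and> c X \<subseteq> d X" by (rule cprop)
  next
    fix n :: nat show "finite ((\<lambda>_. {}) n) \<and> (\<lambda>_. {}) n \<subseteq> S" by simp
  qed
  then obtain K Xs where B: "chain F K \<and> (\<forall>m. finite (Xs m) \<and> Xs m \<subseteq> S) \<and> (\<forall>m. (\<lambda>_. {}) m \<subseteq> Xs m)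
     \<and> (\<forall>m n. m \<le> n \<longrightarrow> Xs m \<subseteq> Xs n) \<and> (\<forall>m. K m \<inter> c (Xs m) \<noteq> {})
     \<and> (\<forall>m n. m < n \<longrightarrow> c (Xs m) \<subseteq> Xs n)" by (elim exE)
  have K: "chain F K" using B by (elim conjE)
  have Xf1: "finite (Xs m)" for m using B by (elim conjE) simp
  have Xf2: "Xs m \<subseteq> S" for m using B by (elim conjE) simp
  have meet: "K m \<inter> c (Xs m) \<noteq> {}" for m using B by (elim conjE) simp
  have cin: "m < n \<Longrightarrow> c (Xs m) \<subseteq> Xs n" for m n using B by (elim conjE) simp
  define T where "T m = c (Xs m)" for m
  have TJ: "JJ (T m)" "T m \<subseteq> d (Xs m)" for m unfolding T_def using cJ[OF Xf1 Xf2] by simp_all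
  have Td: "T m \<subseteq> S - Xs m" for m
    using TJ(2)[of m] d_basic(2)[OF Xf1 Xf2] by (rule subset_trans)
  have Tdisj: "\<forall>m n. m \<noteq> n \<longrightarrow> T m \<inter> T n = {}"
  proof (intro allI impI)
    fix m n :: nat assume "m \<noteq> n"
    then have "m < n \<or> n < m" by linarith
    then show "T m \<inter> T n = {}"
    proof
      assume "m < n"
      then have "T m \<subseteq> Xs n" using cin unfolding T_def by simp
      then show ?thesis using Td[of n] by blast
    next
      assume "n < m"
      then have "T n \<subseteq> Xs m" using cin unfolding T_def by simp
      then show ?thesis using Td[of m] by blast
    qed
  qed
  have cv: "\<exists>M. \<forall>m\<ge>M. K m \<inter> d X \<noteq> {}" if X: "finite X" "X \<subseteq> S" for X
  proof -
    obtain M where M: "\<forall>m\<ge>M. T m \<inter> X = {}" using disj_avoid[OF Tdisj X(1)] by blast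
    have "K m \<inter> d X \<noteq> {}" if m: "m \<ge> M" for m
    proof -
      have J: "\<forall>W. finite W \<and> W \<subseteq> S \<and> W \<inter> T m = {} \<longrightarrow> T m \<subseteq> d W"
        using TJ(1)[of m] unfolding JJ_def by (elim conjE)
      have "X \<inter> T m = {}" using M m by blast
      then have "T m \<subseteq> d X" using J X by simp
      moreover have "K m \<inter> T m \<noteq> {}" using meet unfolding T_def by simp
      ultimately show ?thesis by blast
    qed
    then show ?thesis by blast
  qed
  show ?thesis by (rule conv_neck[OF K cv])
qed

lemma caseB:
  assumes X0: "finite X0" "X0 \<subseteq> S" and noJ: "\<And>T. JJ T \<Longrightarrow> \<not> T \<subseteq> d X0"
  shows "\<exists>N. necklace S F N \<and> (\<forall>X. finite X \<and> X \<subseteq> S \<longrightarrow> finite (N - d X))"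
proof -
  obtain s0 where s0: "s0 \<in> d X0" using d_basic(1)[OF X0] by blast
  define wit where "wit T = (SOME W. finite W \<and> W \<subseteq> S \<and> W \<inter> T = {} \<and> \<not> T \<subseteq> d W)" for T
  have wit: "finite (wit T) \<and> wit T \<subseteq> S \<and> wit T \<inter> T = {} \<and> \<not> T \<subseteq> d (wit T)"
    if T: "finite T" "T \<noteq> {}" "T \<subseteq> d X0" for T
  proof -
    have TS: "T \<subseteq> S" using T(3) d_basic(2)[OF X0] by blast
    have "\<not> JJ T" using noJ T(3) by blast
    then have "\<exists>W. finite W \<and> W \<subseteq> S \<and> W \<inter> T = {} \<and> \<not> T \<subseteq> d W"
      using T(1,2) TS unfolding JJ_def by blast
    then show ?thesis unfolding wit_def by (rule someI_ex)
  qed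
  define Zs where "Zs = rec_nat (X0 \<union> {s0}) (\<lambda>n Z. Z \<union> \<Union>(wit ` {T. T \<subseteq> Z \<inter> d X0 \<and> T \<noteq> {}}))"
  have Z0: "Zs 0 = X0 \<union> {s0}" unfolding Zs_def by simp
  have ZS: "Zs (Suc n) = Zs n \<union> \<Union>(wit ` {T. T \<subseteq> Zs n \<inter> d X0 \<and> T \<noteq> {}})" for n
    unfolding Zs_def by simp
  have Zfin: "finite (Zs n) \<and> Zs n \<subseteq> S" for n
  proof (induction n)
    case 0
    have "s0 \<in> S" using s0 d_basic(2)[OF X0] by blast
    then show ?case unfolding Z0 using X0 by simp
  next
    case (Suc n)
    have fT: "finite {T. T \<subseteq> Zs n \<inter> d X0 \<and> T \<noteq> {}}"
    proof (rule finite_subset)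
      show "{T. T \<subseteq> Zs n \<inter> d X0 \<and> T \<noteq> {}} \<subseteq> Pow (Zs n)" by blast
      show "finite (Pow (Zs n))" using Suc.IH by simp
    qed
    have "\<forall>T\<in>{T. T \<subseteq> Zs n \<inter> d X0 \<and> T \<noteq> {}}. finite (wit T) \<and> wit T \<subseteq> S"
    proof
      fix T assume "T \<in> {T. T \<subseteq> Zs n \<inter> d X0 \<and> T \<noteq> {}}"
      then have T: "T \<subseteq> Zs n" "T \<subseteq> d X0" "T \<noteq> {}" by auto
      have fz: "finite (Zs n)" using Suc.IH by simp
      have fT1: "finite T" using finite_subset[OF T(1) fz] .
      show "finite (wit T) \<and> wit T \<subseteq> S" using wit[OF fT1 T(3) T(2)] by simp
    qed
    then have "finite (\<Union>(wit ` {T. T \<subseteq> Zs n \<inter> d X0 \<and> T \<noteq> {}}))"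
      "\<Union>(wit ` {T. T \<subseteq> Zs n \<inter> d X0 \<and> T \<noteq> {}}) \<subseteq> S" using fT by auto
    then show ?case unfolding ZS using Suc by simp
  qed
  have Zstep: "Zs n \<subseteq> Zs (Suc n)" for n unfolding ZS by blast
  have Zmono: "m \<le> n \<Longrightarrow> Zs m \<subseteq> Zs n" for m n
    using lift_Suc_mono_le[of Zs, OF Zstep] by blast
  have dZmono: "m \<le> n \<Longrightarrow> d (Zs n) \<subseteq> d (Zs m)" for m n
    using d_mono[OF conjunct1[OF Zfin] conjunct2[OF Zfin] Zmono] by blast
  have kill: "\<exists>n. y \<notin> d (Zs n)" for y
  proof (rule ccontr)
    assume "\<nexists>n. y \<notin> d (Zs n)"
    then have yin: "y \<in> d (Zs n)" for n by blast
    have X0Z: "X0 \<subseteq> Zs 0" using Z0 by blast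
    have yX0: "y \<in> d X0" using yin[of 0] d_mono[OF conjunct1[OF Zfin] conjunct2[OF Zfin] X0Z] by blast
    obtain H where H: "H \<in> F" "H \<subseteq> d X0" "y \<in> H" "s0 \<in> H"
      using conn_pair[OF d_basic(3)[OF X0] yX0 s0] by blast
    have Hfin: "finite H" using F_fin[OF H(1)] .
    have "\<exists>N. H \<inter> Zs (Suc N) = H \<inter> Zs N"
    proof (rule ccontr)
      assume "\<nexists>N. H \<inter> Zs (Suc N) = H \<inter> Zs N"
      then have ps: "H \<inter> Zs N \<subset> H \<inter> Zs (Suc N)" for N using Zstep by blast
      have "card (H \<inter> Zs N) \<ge> N" for N
      proof (induction N)
        case 0 then show ?case by simp
      next
        case (Suc N)
        have "card (H \<inter> Zs N) < card (H \<inter> Zs (Suc N))"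
          using psubset_card_mono[OF _ ps[of N]] Hfin by simp
        then show ?case using Suc by simp
      qed
      then have "card (H \<inter> Zs (Suc (card H))) \<ge> Suc (card H)" by blast
      moreover have "card (H \<inter> Zs (Suc (card H))) \<le> card H" using Hfin by (simp add: card_mono)
      ultimately show False by simp
    qed
    then obtain N where NN: "H \<inter> Zs (Suc N) = H \<inter> Zs N" by blast
    define T where "T = H \<inter> Zs N"
    have s0Z: "s0 \<in> Zs N" using Z0 Zmono[of 0 N] by auto
    have T: "finite T" "T \<noteq> {}" "T \<subseteq> d X0" unfolding T_def using Hfin H s0Z by auto
    have Tin: "T \<in> {T. T \<subseteq> Zs N \<inter> d X0 \<and> T \<noteq> {}}" using T unfolding T_def by blast
    have WZ: "wit T \<subseteq> Zs (Suc N)" unfolding ZS using Tin by blast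
    note w = wit[OF T]
    have HW: "H \<inter> wit T = {}"
    proof -
      have "H \<inter> wit T \<subseteq> T" using WZ NN unfolding T_def by blast
      then show ?thesis using w by blast
    qed
    have HS: "H \<subseteq> S - wit T" using HW F_sub[OF H(1)] by blast
    have wf: "finite (wit T)" "wit T \<subseteq> S" using w by blast+
    have "d (Zs (Suc N)) \<subseteq> d (wit T)" using d_mono[OF conjunct1[OF Zfin] conjunct2[OF Zfin] WZ] .
    then have "y \<in> d (wit T)" using yin by blast
    then have "d (wit T) \<inter> H \<noteq> {}" using H(3) by blast
    then have "H \<subseteq> d (wit T)" using comp_absorb[OF d_comp[OF wf] F_conn[OF H(1)] HS] by blast
    then have "T \<subseteq> d (wit T)" unfolding T_def by blast
    then show False using w by blast
  qed
  have killX: "\<exists>n. X \<inter> d (Zs n) = {}" if "finite X" for X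
    using that
  proof (induction X rule: finite_induct)
    case empty then show ?case by simp
  next
    case (insert x X)
    obtain n1 where n1: "X \<inter> d (Zs n1) = {}" using insert by blast
    obtain n2 where n2: "x \<notin> d (Zs n2)" using kill by blast
    have "d (Zs (max n1 n2)) \<subseteq> d (Zs n1)" "d (Zs (max n1 n2)) \<subseteq> d (Zs n2)" using dZmono by simp_all
    then have "insert x X \<inter> d (Zs (max n1 n2)) = {}" using n1 n2 by blast
    then show ?case by blast
  qed
  define c where "c X = {SOME p. p \<in> d X}" for X
  have cprop: "finite (c X) \<and> c X \<noteq> {} \<and> c X \<subseteq> d X" if "finite X" "X \<subseteq> S" for X
    unfolding c_def using d_basic(1)[OF that] by (simp add: some_in_eq)
  have bex: "\<exists>K Xs. chain F K \<and> (\<forall>m. finite (Xs m) \<and> Xs m \<subseteq> S) \<and> (\<forall>m. Zs m \<subseteq> Xs m)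
     \<and> (\<forall>m n. m \<le> n \<longrightarrow> Xs m \<subseteq> Xs n) \<and> (\<forall>m. K m \<inter> c (Xs m) \<noteq> {})
     \<and> (\<forall>m n. m < n \<longrightarrow> c (Xs m) \<subseteq> Xs n)"
  proof (rule build)
    fix X :: "'a set" assume "finite X" "X \<subseteq> S"
    then show "finite (c X) \<and> c X \<noteq> {} \<and> c X \<subseteq> d X" by (rule cprop)
  next
    fix n :: nat show "finite (Zs n) \<and> Zs n \<subseteq> S" by (rule Zfin)
  qed
  then obtain K Xs where B: "chain F K \<and> (\<forall>m. finite (Xs m) \<and> Xs m \<subseteq> S) \<and> (\<forall>m. Zs m \<subseteq> Xs m)
     \<and> (\<forall>m n. m \<le> n \<longrightarrow> Xs m \<subseteq> Xs n) \<and> (\<forall>m. K m \<inter> c (Xs m) \<noteq> {})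
     \<and> (\<forall>m n. m < n \<longrightarrow> c (Xs m) \<subseteq> Xs n)" by (elim exE)
  have K: "chain F K" using B by (elim conjE)
  have Xf1: "finite (Xs m)" for m using B by (elim conjE) simp
  have Xf2: "Xs m \<subseteq> S" for m using B by (elim conjE) simp
  have Zin: "Zs m \<subseteq> Xs m" for m using B by (elim conjE) simp
  have meet: "K m \<inter> c (Xs m) \<noteq> {}" for m using B by (elim conjE) simp
  have cv: "\<exists>M. \<forall>m\<ge>M. K m \<inter> d X \<noteq> {}" if X: "finite X" "X \<subseteq> S" for X
  proof -
    obtain n where n: "X \<inter> d (Zs n) = {}" using killX[OF X(1)] by blast
    have dn: "d (Zs n) \<subseteq> d X" using d_sub2[OF X conjunct1[OF Zfin] conjunct2[OF Zfin]] n by blast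
    have "K m \<inter> d X \<noteq> {}" if m: "m \<ge> n" for m
    proof -
      have "c (Xs m) \<subseteq> d (Xs m)" using cprop[OF Xf1 Xf2] by simp
      also have "\<dots> \<subseteq> d (Zs m)" using d_mono[OF Xf1 Xf2 Zin] .
      also have "\<dots> \<subseteq> d (Zs n)" using dZmono[OF m] .
      also have "\<dots> \<subseteq> d X" by (rule dn)
      finally show ?thesis using meet[of m] by blast
    qed
    then show ?thesis by blast
  qed
  show ?thesis by (rule conv_neck[OF K cv])
qed

lemma exists_neck: "\<exists>N. necklace S F N \<and> (\<forall>X. finite X \<and> X \<subseteq> S \<longrightarrow> finite (N - d X))"
proof (cases "\<forall>X. finite X \<and> X \<subseteq> S \<longrightarrow> (\<exists>T. JJ T \<and> T \<subseteq> d X)")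
  case True
  then show ?thesis using caseA by blast
next
  case False
  then obtain X0 where X0: "finite X0" "X0 \<subseteq> S" "\<not> (\<exists>T. JJ T \<and> T \<subseteq> d X0)" by blast
  then show ?thesis using caseB[OF X0(1,2)] by blast
qed

end


context dcd begin

lemma dir_surj: "\<exists>\<omega>\<in>ends S F. dirof \<omega> = d"
proof -
  obtain N where N: "necklace S F N" and fin: "\<forall>X. finite X \<and> X \<subseteq> S \<longrightarrow> finite (N - d X)"
    using exists_neck by blast
  define \<omega> where "\<omega> = {N'. necklace S F N' \<and> neck_equiv S F N N'}"
  have we: "\<omega> \<in> ends S F" unfolding ends_def \<omega>_def using N by blast
  have "\<forall>A. finite A \<and> A \<subseteq> S \<longrightarrow> d A = Kend S F A \<omega>"
  proof (intro allI impI)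
    fix A assume A0: "finite A \<and> A \<subseteq> S"
    then have A: "finite A" "A \<subseteq> S" by blast+
    note tb = tail_basic[OF N A(1)]
    have fA: "finite (N - d A)" using fin A by blast
    have i: "d A \<inter> tail S F N A \<noteq> {}"
    proof
      assume "d A \<inter> tail S F N A = {}"
      then have "tail S F N A \<subseteq> N - d A" using tb(2) by blast
      then show False using tb(4) fA finite_subset by blast
    qed
    have s: "tail S F N A \<subseteq> S - A" using tb(2) necklace_sub[OF N] by blast
    have "tail S F N A \<subseteq> d A" using comp_absorb[OF d_comp[OF A] tb(3) s i] .
    then have "Kend S F A \<omega> = d A" using Kend_char[OF N \<omega>_def A d_comp[OF A]] by blast
    then show "d A = Kend S F A \<omega>" by simp
  qed
  then have "d = dirof \<omega>" using dir_unique[OF dir] by blast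
  then show ?thesis using we by blast
qed

end

theorem theorem1p1:
  fixes S :: "'a set" and F :: "'a set set"
  assumes "connectoid S F"
  shows "(\<forall>\<omega>\<in>ends S F. \<exists>!d. direction S F d \<and>
            (\<forall>A. finite A \<and> A \<subseteq> S \<longrightarrow> d A = Kend S F A \<omega>))
       \<and> bij_betw (\<lambda>\<omega>. THE d. direction S F d \<and>
            (\<forall>A. finite A \<and> A \<subseteq> S \<longrightarrow> d A = Kend S F A \<omega>))
            (ends S F) (directions S F)"
proof -
  interpret cd S F by unfold_locales (rule assms)
  have ex: "direction S F (dirof \<omega>) \<and> (\<forall>A. finite A \<and> A \<subseteq> S \<longrightarrow> dirof \<omega> A = Kend S F A \<omega>)"
    if "\<omega> \<in> ends S F" for \<omega>
    using dirof_dir[OF that] unfolding dirof_def by simp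
  have un: "d = dirof \<omega>" if "direction S F d \<and> (\<forall>A. finite A \<and> A \<subseteq> S \<longrightarrow> d A = Kend S F A \<omega>)" for d \<omega>
    using dir_unique that by blast
  have part1: "\<forall>\<omega>\<in>ends S F. \<exists>!d. direction S F d \<and> (\<forall>A. finite A \<and> A \<subseteq> S \<longrightarrow> d A = Kend S F A \<omega>)"
  proof
    fix \<omega> assume w: "\<omega> \<in> ends S F"
    show "\<exists>!d. direction S F d \<and> (\<forall>A. finite A \<and> A \<subseteq> S \<longrightarrow> d A = Kend S F A \<omega>)"
    proof (rule ex1I[of _ "dirof \<omega>"])
      show "direction S F (dirof \<omega>) \<and> (\<forall>A. finite A \<and> A \<subseteq> S \<longrightarrow> dirof \<omega> A = Kend S F A \<omega>)"
        by (rule ex[OF w])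
    next
      fix y assume "direction S F y \<and> (\<forall>A. finite A \<and> A \<subseteq> S \<longrightarrow> y A = Kend S F A \<omega>)"
      then show "y = dirof \<omega>" by (rule un)
    qed
  qed
  have the_eq: "(THE d. direction S F d \<and> (\<forall>A. finite A \<and> A \<subseteq> S \<longrightarrow> d A = Kend S F A \<omega>)) = dirof \<omega>"
    if w: "\<omega> \<in> ends S F" for \<omega>
  proof (rule the_equality)
    show "direction S F (dirof \<omega>) \<and> (\<forall>A. finite A \<and> A \<subseteq> S \<longrightarrow> dirof \<omega> A = Kend S F A \<omega>)"
      by (rule ex[OF w])
  next
    fix y assume "direction S F y \<and> (\<forall>A. finite A \<and> A \<subseteq> S \<longrightarrow> y A = Kend S F A \<omega>)"
    then show "y = dirof \<omega>" by (rule un)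
  qed
  have img: "dirof ` ends S F = directions S F"
  proof
    show "dirof ` ends S F \<subseteq> directions S F" unfolding directions_def using dirof_dir by blast
  next
    show "directions S F \<subseteq> dirof ` ends S F"
    proof
      fix d assume "d \<in> directions S F"
      then have dd: "direction S F d" unfolding directions_def by simp
      interpret D: dcd S F d by unfold_locales (rule dd)
      obtain \<omega> where "\<omega> \<in> ends S F" "dirof \<omega> = d" using D.dir_surj by blast
      then show "d \<in> dirof ` ends S F" by blast
    qed
  qed
  have "bij_betw dirof (ends S F) (directions S F)"
    unfolding bij_betw_def using img dirof_inj by (auto simp: inj_on_def)
  then have "bij_betw (\<lambda>\<omega>. THE d. direction S F d \<and> (\<forall>A. finite A \<and> A \<subseteq> S \<longrightarrow> d A = Kend S F A \<omega>))
            (ends S F) (directions S F)"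
    using bij_betw_cong[of "ends S F" "\<lambda>\<omega>. THE d. direction S F d \<and> (\<forall>A. finite A \<and> A \<subseteq> S \<longrightarrow> d A = Kend S F A \<omega>)" dirof] the_eq by simp
  then show ?thesis using part1 by blast
qed

end
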